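(* Let $\bm{DS}\subset\mathbb{R}^d$ be a finite set with $|\bm{DS}|=n$ and let $D\subseteq\bm{DS}$ with $|D|=n'$. Consider the procedure $\mathrm{cac}(\bm{DS},D)$: initialize $C\leftarrow\mathbb{R}^d$; for each $x\in\bm{DS}\setminus D$, call a subroutine which either returns an affine function $\pi(z)=w\cdot z+b$ ($w\in\mathbb{R}^d$, $b\in\mathbb{R}$) with $\pi(z)<0$ for all $z\in D$ and $\pi(x)>0$, or reports that no such affine function exists; in the latter case the procedure terminates and outputs $\emptyset$ (failure), and otherwise it sets $C\leftarrow C\cap\{z\in\mathbb{R}^d\mid \pi(z)\le 0\}$; after all $x\in\bm{DS}\setminus D$ are processed, it outputs $C$. Then: (1) If $\mathrm{cac}(\bm{DS},D)$ outputs $\emptyset$, then $D$ is not convex-area separable in $\bm{DS}$. (2) If $\mathrm{cac}(\bm{DS},D)$ outputs $C\neq\emptyset$, then $C$ is a convex area with $D\subseteq C$ and $C\cap(\bm{DS}\setminus D)=\emptyset$. (3) If the subroutine runs in $O(n')$ time on each call, the running time of $\mathrm{cac}$ is $O(nn')$.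
   Context: A convex area in $\mathbb{R}^d$ is a set of the form $\bigcap_{k=1}^{K}\{z\in\mathbb{R}^d\mid \alpha_k\cdot z+\gamma_k\le 0\}$ with $\alpha_k\in\mathbb{R}^d$, $\gamma_k\in\mathbb{R}$ (with $\mathbb{R}^d$ itself, the empty intersection, also allowed). A subset $D\subseteq\bm{DS}$ is convex-area separable in $\bm{DS}$ if there exists a convex area $C$ with $D\subseteq C$ and $C\cap(\bm{DS}\setminus D)=\emptyset$. *)

theory Defs
  imports "HOL-Analysis.Analysis"
begin

text \<open>Points of R^d are modelled as vectors of type real^'d (d = CARD('d)).\<close>

definition convex_area :: "(real^'d) set \<Rightarrow> bool" where
  "convex_area C \<longleftrightarrow>
     (\<exists>L :: ((real^'d) \<times> real) list.
        C = {z. \<forall>(\<alpha>, \<gamma>) \<in> set L. \<alpha> \<bullet> z + \<gamma> \<le> 0})"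

definition convex_area_separable :: "(real^'d) set \<Rightarrow> (real^'d) set \<Rightarrow> bool" where
  "convex_area_separable D DS \<longleftrightarrow>
     (\<exists>C. convex_area C \<and> D \<subseteq> C \<and> C \<inter> (DS - D) = {})"

definition sub_spec :: "((real^'d) set \<Rightarrow> real^'d \<Rightarrow> ((real^'d) \<times> real) option)
                         \<Rightarrow> (real^'d) set \<Rightarrow> real^'d \<Rightarrow> bool" where
  "sub_spec sub D x \<longleftrightarrow>
     (case sub D x of
        Some (w, b) \<Rightarrow> (\<forall>z\<in>D. w \<bullet> z + b < 0) \<and> w \<bullet> x + b > 0
      | None \<Rightarrow> \<not> (\<exists>w b. (\<forall>z\<in>D. w \<bullet> z + b < 0) \<and> w \<bullet> x + b > 0))"

text \<open>The loop of cac, processing the points of DS - D in the order of the list.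
  None = failure (the procedure outputs the empty set as failure signal).\<close>
fun cac_loop :: "((real^'d) set \<Rightarrow> real^'d \<Rightarrow> ((real^'d) \<times> real) option)
                  \<Rightarrow> (real^'d) set \<Rightarrow> (real^'d) list \<Rightarrow> (real^'d) set \<Rightarrow> (real^'d) set option" where
  "cac_loop sub D [] C = Some C"
| "cac_loop sub D (x # xs) C =
     (case sub D x of
        None \<Rightarrow> None
      | Some (w, b) \<Rightarrow> cac_loop sub D xs (C \<inter> {z. w \<bullet> z + b \<le> 0}))"

definition cac :: "((real^'d) set \<Rightarrow> real^'d \<Rightarrow> ((real^'d) \<times> real) option)
                    \<Rightarrow> (real^'d) set \<Rightarrow> (real^'d) list \<Rightarrow> (real^'d) set option" where
  "cac sub D xs = cac_loop sub D xs UNIV"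

text \<open>Running time of cac: each processed point costs the subroutine time T D x
  plus one unit for the bookkeeping (intersecting with a half-space); the
  procedure stops at the first failing call.\<close>
fun cac_time :: "((real^'d) set \<Rightarrow> real^'d \<Rightarrow> ((real^'d) \<times> real) option)
                  \<Rightarrow> ((real^'d) set \<Rightarrow> real^'d \<Rightarrow> nat)
                  \<Rightarrow> (real^'d) set \<Rightarrow> (real^'d) list \<Rightarrow> nat" where
  "cac_time sub T D [] = 0"
| "cac_time sub T D (x # xs) =
     T D x + 1 + (case sub D x of None \<Rightarrow> 0 | Some _ \<Rightarrow> cac_time sub T D xs)"

end

theory Submission
  imports Defs
begin

lemma loop_some:
  "cac_loop sub D xs C = Some C' \<Longrightarrow> (\<forall>x\<in>set xs. sub_spec sub D x) \<Longrightarrow>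
   \<exists>L. C' = C \<inter> {z. \<forall>(\<alpha>, \<gamma>) \<in> set L. \<alpha> \<bullet> z + \<gamma> \<le> 0}
      \<and> (\<forall>(\<alpha>, \<gamma>) \<in> set L. \<forall>z\<in>D. \<alpha> \<bullet> z + \<gamma> < 0)
      \<and> (\<forall>x\<in>set xs. \<exists>(\<alpha>, \<gamma>) \<in> set L. \<alpha> \<bullet> x + \<gamma> > 0)"
proof (induction xs arbitrary: C)
  case Nil
  then show ?case by (intro exI[of _ "[]"]) auto
next
  case (Cons x xs)
  then obtain w b where s: "sub D x = Some (w, b)"
    by (cases "sub D x") auto
  with Cons.prems have sp: "(\<forall>z\<in>D. w \<bullet> z + b < 0) \<and> w \<bullet> x + b > 0"
    unfolding sub_spec_def by auto
  from Cons.prems s have "cac_loop sub D xs (C \<inter> {z. w \<bullet> z + b \<le> 0}) = Some C'" by simp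
  from Cons.IH[OF this] Cons.prems obtain L where L:
    "C' = (C \<inter> {z. w \<bullet> z + b \<le> 0}) \<inter> {z. \<forall>(\<alpha>, \<gamma>) \<in> set L. \<alpha> \<bullet> z + \<gamma> \<le> 0}"
    "(\<forall>(\<alpha>, \<gamma>) \<in> set L. \<forall>z\<in>D. \<alpha> \<bullet> z + \<gamma> < 0)"
    "(\<forall>x\<in>set xs. \<exists>(\<alpha>, \<gamma>) \<in> set L. \<alpha> \<bullet> x + \<gamma> > 0)" by auto
  show ?case
    apply (rule exI[of _ "(w,b) # L"])
    using L sp by auto
qed

lemma loop_none:
  "cac_loop sub D xs C = None \<Longrightarrow> \<exists>x\<in>set xs. sub D x = None"
  by (induction xs arbitrary: C) (auto split: option.splits)

lemma time_bound:
  "(\<forall>x\<in>set xs. T D x \<le> M) \<Longrightarrow> cac_time sub T D xs \<le> length xs * (M + 1)"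
  by (induction xs) (auto split: option.splits)

lemma part1:
  fixes DS :: "(real^'d) set" and sub :: "(real^'d) set \<Rightarrow> real^'d \<Rightarrow> ((real^'d) \<times> real) option"
  assumes H: "finite DS \<and> D \<subseteq> DS \<and> distinct xs \<and> set xs = DS - D \<and>
      (\<forall>x\<in>DS - D. sub_spec sub D x)"
  shows "(cac sub D xs = None \<longrightarrow> \<not> convex_area_separable D DS) \<and>
        (\<forall>C. cac sub D xs = Some C \<and> C \<noteq> {} \<longrightarrow>
              convex_area C \<and> D \<subseteq> C \<and> C \<inter> (DS - D) = {})"
proof (rule conjI; intro allI impI)
    assume N: "cac sub D xs = None"
    then obtain x where x: "x \<in> set xs" "sub D x = None"
      using loop_none unfolding cac_def by blast
    have "sub_spec sub D x" using H x(1) by auto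
    then have nx: "\<not> (\<exists>w b. (\<forall>z\<in>D. w \<bullet> z + b < 0) \<and> w \<bullet> x + b > 0)"
      unfolding sub_spec_def using x(2) by simp
    show "\<not> convex_area_separable D DS"
    proof
      assume "convex_area_separable D DS"
      then obtain C L where C: "D \<subseteq> C" "C \<inter> (DS - D) = {}"
        and L: "C = {z. \<forall>(\<alpha>, \<gamma>) \<in> set L. \<alpha> \<bullet> z + \<gamma> \<le> 0}"
        unfolding convex_area_separable_def convex_area_def by blast
      have "x \<notin> C" using C x H by auto
      then have "\<not> (\<forall>(\<alpha>, \<gamma>) \<in> set L. \<alpha> \<bullet> x + \<gamma> \<le> 0)" using L by simp
      then obtain a g where ag: "(a, g) \<in> set L" "a \<bullet> x + g > 0" by (auto simp: not_le)
      have Dz: "a \<bullet> z + g \<le> 0" if "z \<in> D" for z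
      proof -
        have "z \<in> C" using that C by auto
        then show ?thesis using ag(1) L by auto
      qed
      define e where "e = (a \<bullet> x + g) / 2"
      have ep: "e > 0" using ag(2) unfolding e_def by simp
      have "(\<forall>z\<in>D. a \<bullet> z + (g - e) < 0) \<and> a \<bullet> x + (g - e) > 0"
      proof (intro conjI ballI)
        fix z assume "z \<in> D" then show "a \<bullet> z + (g - e) < 0" using Dz ep by fastforce
      next
        show "a \<bullet> x + (g - e) > 0" using ag(2) by (simp add: e_def field_simps)
      qed
      with nx show False by blast
    qed
next
  fix C
  assume S: "cac sub D xs = Some C \<and> C \<noteq> {}"
  then have "cac_loop sub D xs UNIV = Some C" unfolding cac_def by simp
  have "\<forall>x\<in>set xs. sub_spec sub D x" using H by auto
  from loop_some[OF \<open>cac_loop sub D xs UNIV = Some C\<close> this] obtain L where L: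
    "C = UNIV \<inter> {z. \<forall>(\<alpha>, \<gamma>) \<in> set L. \<alpha> \<bullet> z + \<gamma> \<le> 0}"
    "(\<forall>(\<alpha>, \<gamma>) \<in> set L. \<forall>z\<in>D. \<alpha> \<bullet> z + \<gamma> < 0)"
    "(\<forall>x\<in>set xs. \<exists>(\<alpha>, \<gamma>) \<in> set L. \<alpha> \<bullet> x + \<gamma> > 0)" by blast
  show "convex_area C \<and> D \<subseteq> C \<and> C \<inter> (DS - D) = {}"
  proof (intro conjI)
    show "convex_area C" unfolding convex_area_def using L(1) by auto
    show "D \<subseteq> C" using L(1,2) by fastforce
    show "C \<inter> (DS - D) = {}"
    proof (rule ccontr)
      assume "C \<inter> (DS - D) \<noteq> {}"
      then obtain x where "x \<in> C" "x \<in> set xs" using H by auto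
      then show False using L(1,3) by fastforce
    qed
  qed
qed

theorem lemma2:
  shows
  "(\<forall>(DS :: (real^'d) set) D xs sub.
      finite DS \<and> D \<subseteq> DS \<and> distinct xs \<and> set xs = DS - D \<and>
      (\<forall>x\<in>DS - D. sub_spec sub D x) \<longrightarrow>
        (cac sub D xs = None \<longrightarrow> \<not> convex_area_separable D DS) \<and>
        (\<forall>C. cac sub D xs = Some C \<and> C \<noteq> {} \<longrightarrow>
              convex_area C \<and> D \<subseteq> C \<and> C \<inter> (DS - D) = {}))
   \<and>
   (\<forall>c :: nat. \<exists>K :: nat. \<forall>(DS :: (real^'d) set) D xs sub T.
      finite DS \<and> D \<subseteq> DS \<and> distinct xs \<and> set xs = DS - D \<and>
      (\<forall>x\<in>DS - D. sub_spec sub D x) \<and>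
      (\<forall>x\<in>DS - D. T D x \<le> c * (card D + 1)) \<longrightarrow>
        cac_time sub T D xs \<le> K * (card DS + 1) * (card D + 1))"
proof (rule conjI[OF _ allI])
  show "\<forall>(DS :: (real^'d) set) D xs sub.
      finite DS \<and> D \<subseteq> DS \<and> distinct xs \<and> set xs = DS - D \<and>
      (\<forall>x\<in>DS - D. sub_spec sub D x) \<longrightarrow>
        (cac sub D xs = None \<longrightarrow> \<not> convex_area_separable D DS) \<and>
        (\<forall>C. cac sub D xs = Some C \<and> C \<noteq> {} \<longrightarrow>
              convex_area C \<and> D \<subseteq> C \<and> C \<inter> (DS - D) = {})"
    using part1 by blast
next
  fix c :: nat
  show "\<exists>K :: nat. \<forall>(DS :: (real^'d) set) D xs sub T.
      finite DS \<and> D \<subseteq> DS \<and> distinct xs \<and> set xs = DS - D \<and>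
      (\<forall>x\<in>DS - D. sub_spec sub D x) \<and>
      (\<forall>x\<in>DS - D. T D x \<le> c * (card D + 1)) \<longrightarrow>
        cac_time sub T D xs \<le> K * (card DS + 1) * (card D + 1)"
  proof (intro exI[of _ "c + 1"] allI impI)
    fix DS D xs sub T
    assume H: "finite DS \<and> D \<subseteq> (DS :: (real^'d) set) \<and> distinct xs \<and> set xs = DS - D \<and>
      (\<forall>x\<in>DS - D. sub_spec sub D x) \<and>
      (\<forall>x\<in>DS - D. T D x \<le> c * (card D + 1))"
    have t: "cac_time sub T D xs \<le> length xs * (c * (card D + 1) + 1)"
      using H by (intro time_bound) auto
    have "length xs = card (DS - D)" using H distinct_card by metis
    also have "\<dots> \<le> card DS" using H by (simp add: card_mono)
    finally have l: "length xs \<le> card DS + 1" by simp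
    have "c * (card D + 1) + 1 \<le> (c + 1) * (card D + 1)" by simp
    then have "length xs * (c * (card D + 1) + 1) \<le> (card DS + 1) * ((c + 1) * (card D + 1))"
      using l by (rule mult_le_mono[rotated])
    then show "cac_time sub T D xs \<le> (c + 1) * (card DS + 1) * (card D + 1)"
    proof -
      have "(card DS + 1) * ((c + 1) * (card D + 1)) = (c + 1) * (card DS + 1) * (card D + 1)"
        by (simp only: mult_ac)
      then show ?thesis using t \<open>length xs * (c * (card D + 1) + 1) \<le> _\<close> by linarith
    qed
  qed
qed

end
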